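(* Let $n\ge1$ and let $A$ be a set with an $(n+1)$-ary operation $\theta$, binary operations $\alpha_1,\dots,\alpha_n$ and an element $e\in A$ such that $\alpha_i(a,a)=e$ and $\theta(\alpha_1(a,b),\dots,\alpha_n(a,b),b)=a$ for all $a,b\in A$, and such that $\theta$ is 2-associative, i.e. $\theta(a_1,\dots,a_n,\theta(b_1,\dots,b_n,c))=\theta(\theta(a_1,\dots,a_n,b_1),\dots,\theta(a_1,\dots,a_n,b_n),c)$ for all elements. Then: (a) $\theta(a,a,\dots,a,e)=a$ for every $a\in A$; (b) for any $b,c\in A$ there is a unique $a\in A$ with $\theta(a,a,\dots,a,b)=c$; (c) for any $a,c\in A$ there is a unique $b\in A$ with $\theta(a,a,\dots,a,b)=c$.
   Context: $\theta(a,a,\dots,a,x)$ denotes $\theta$ with $a$ in the first $n$ arguments and $x$ in the last. *)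

theory Defs
  imports Main
begin

end

theory Submission
  imports Defs
begin

theorem corollary4p5:
  fixes n :: nat
    and \<theta> :: "'a list \<Rightarrow> 'a \<Rightarrow> 'a"
    and \<alpha> :: "nat \<Rightarrow> 'a \<Rightarrow> 'a \<Rightarrow> 'a"
    and e :: 'a
  assumes n: "n \<ge> 1"
    and alpha_diag: "\<And>i a. i < n \<Longrightarrow> \<alpha> i a a = e"
    and theta_alpha: "\<And>a b. \<theta> (map (\<lambda>i. \<alpha> i a b) [0..<n]) b = a"
    and assoc2: "\<And>as bs c. length as = n \<Longrightarrow> length bs = n \<Longrightarrow>
        \<theta> as (\<theta> bs c) = \<theta> (map (\<lambda>b. \<theta> as b) bs) c"
  shows "(\<forall>a. \<theta> (replicate n a) e = a)
       \<and> (\<forall>b c. \<exists>!a. \<theta> (replicate n a) b = c)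
       \<and> (\<forall>a c. \<exists>!b. \<theta> (replicate n a) b = c)"
proof -
  define m where "m a c = \<theta> (replicate n a) c" for a c
  define A where "A a b = map (\<lambda>i. \<alpha> i a b) [0..<n]" for a b
  have lenA: "length (A a b) = n" for a b by (simp add: A_def)
  have Aaa: "A a a = replicate n e" for a
    by (rule nth_equalityI) (auto simp: A_def alpha_diag)
  have TA: "\<theta> (A a b) b = a" for a b using theta_alpha by (simp add: A_def)
  have L1: "m e c = c" for c using TA[of c c] by (simp add: Aaa m_def)
  have G: "\<theta> as c = m (\<theta> as e) c" if "length as = n" for as c
    using assoc2[OF that, of "replicate n e" c] L1 by (simp add: m_def)
  have as: "m a (m b c) = m (m a b) c" for a b c
    using assoc2[of "replicate n a" "replicate n b" c] by (simp add: m_def)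
  have R1: "m a e = a" for a
  proof -
    have "a = \<theta> (A a e) e" using TA by simp
    also have "\<dots> = m (\<theta> (A a e) e) e" using G lenA by blast
    finally show ?thesis using TA by metis
  qed
  have D: "m (\<theta> (A c b) e) b = c" for b c using G[OF lenA] TA by metis
  have linv: "m (\<theta> (A e b) e) b = e" for b using D .
  have rinv: "m b (\<theta> (A e b) e) = e" for b
  proof -
    define y where "y = \<theta> (A e b) e"
    define z where "z = \<theta> (A e y) e"
    have yb: "m y b = e" using linv y_def by simp
    have zy: "m z y = e" using linv z_def by simp
    have "m b y = m (m z y) (m b y)" using L1 zy by simp
    also have "\<dots> = m z (m (m y b) y)" using as by metis
    also have "\<dots> = e" using yb zy L1 by simp
    finally show ?thesis by (simp add: y_def)
  qed
  have rc: "a = a'" if "m a b = m a' b" for a a' b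
    by (metis R1 as rinv that)
  have lc: "b = b'" if "m a b = m a b'" for a b b'
    by (metis L1 as linv that)
  show ?thesis
  proof (intro conjI allI)
    fix a show "\<theta> (replicate n a) e = a" using R1 m_def by simp
  next
    fix b c show "\<exists>!a. \<theta> (replicate n a) b = c"
      using D rc unfolding m_def by metis
  next
    fix a c show "\<exists>!b. \<theta> (replicate n a) b = c"
    proof
      show "\<theta> (replicate n a) (m (\<theta> (A e a) e) c) = c"
        using as rinv L1 unfolding m_def by metis
    next
      fix b assume "\<theta> (replicate n a) b = c"
      then show "b = m (\<theta> (A e a) e) c"
        using as linv L1 unfolding m_def by metis
    qed
  qed
qed

end
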